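(* Let $h$ be a $K$-strongly convex distance-generating function on $\mathcal{X}$ and assume $\nabla h$ is $L_h$-Lipschitz. Then for every $y\in\mathcal{V}^*$, $$\|P_{x_1}(y)-P_{x_2}(y)\|\le\frac{L_h}{K}\|x_1-x_2\|\qquad\text{for all } x_1,x_2\in\operatorname{dom}\partial h.$$
   Context: $\mathcal{X}$ is a compact convex subset of a finite-dimensional normed space $\mathcal{V}$ with norm $\|\cdot\|$ and dual space $\mathcal{V}^*$ with dual norm $\|\cdot\|_*$. $h$ is differentiable on a domain containing $\mathcal{X}$, $K$-strongly convex in the sense $\langle\nabla h(x)-\nabla h(x'),x-x'\rangle\ge K\|x-x'\|^2$ for all $x,x'\in\mathcal{X}$, and $L_h$-Lipschitz gradient means $\|\nabla h(x)-\nabla h(x')\|_*\le L_h\|x-x'\|$. $\operatorname{dom}\partial h$ denotes the set of points of $\mathcal{X}$ where $h$ has nonempty subdifferential. The Bregman divergence is $D(p,x)=h(p)-h(x)-\langle\nabla h(x),p-x\rangle$ and the prox-mapping is $P_x(y)=\arg\min_{x'\in\mathcal{X}}\{\langle y,x-x'\rangle+D(x',x)\}$. *)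

theory Defs
  imports "HOL-Analysis.Analysis"
begin

text \<open>The finite-dimensional space V is modelled by a type 'a of class euclidean_space
(used only for its finite-dimensional real vector structure); the norm of V is an
arbitrary norm N.  The dual space V* is identified with 'a via the pairing
y \<bullet> x (every linear functional on a finite-dimensional space is of this form).\<close>

definition is_norm :: "('a::real_vector \<Rightarrow> real) \<Rightarrow> bool" where
  "is_norm N \<longleftrightarrow>
     (\<forall>x. 0 \<le> N x) \<and> (\<forall>x. N x = 0 \<longleftrightarrow> x = 0) \<and>
     (\<forall>c x. N (c *\<^sub>R x) = \<bar>c\<bar> * N x) \<and> (\<forall>x y. N (x + y) \<le> N x + N y)"

definition dual_norm :: "('a::real_inner \<Rightarrow> real) \<Rightarrow> 'a \<Rightarrow> real" where
  "dual_norm N y = Sup {y \<bullet> x | x. N x \<le> 1}"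

definition bregman :: "('a::real_inner \<Rightarrow> real) \<Rightarrow> ('a \<Rightarrow> 'a) \<Rightarrow> 'a \<Rightarrow> 'a \<Rightarrow> real" where
  "bregman h g p x = h p - h x - g x \<bullet> (p - x)"

definition prox :: "('a::real_inner \<Rightarrow> real) \<Rightarrow> ('a \<Rightarrow> 'a) \<Rightarrow> 'a set \<Rightarrow> 'a \<Rightarrow> 'a \<Rightarrow> 'a" where
  "prox h g X x y = (SOME p. p \<in> X \<and>
      (\<forall>x'\<in>X. y \<bullet> (x - p) + bregman h g p x \<le> y \<bullet> (x - x') + bregman h g x' x))"

definition dom_subdiff :: "('a::real_inner \<Rightarrow> real) \<Rightarrow> 'a set \<Rightarrow> 'a set" where
  "dom_subdiff h X = {x \<in> X. \<exists>u. \<forall>x'\<in>X. h x' \<ge> h x + u \<bullet> (x' - x)}"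

end

theory Submission
  imports Defs
begin

lemma norm_lower:
  fixes N :: "'a::euclidean_space \<Rightarrow> real"
  assumes "is_norm N"
  shows "\<exists>m>0. \<forall>x. m * norm x \<le> N x"
proof -
  have nn: "\<And>x. 0 \<le> N x" and z: "\<And>x. N x = 0 \<longleftrightarrow> x = 0"
    and hom: "\<And>c x. N (c *\<^sub>R x) = \<bar>c\<bar> * N x" and tri: "\<And>x y. N (x + y) \<le> N x + N y"
    using assms unfolding is_norm_def by auto
  have "convex_on UNIV N"
  proof (rule convex_onI)
    fix t :: real and x y :: 'a assume t: "0 < t" "t < 1"
    have "N ((1 - t) *\<^sub>R x + t *\<^sub>R y) \<le> N ((1 - t) *\<^sub>R x) + N (t *\<^sub>R y)" by (rule tri)
    also have "\<dots> = (1 - t) * N x + t * N y" using t by (simp add: hom)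
    finally show "N ((1 - t) *\<^sub>R x + t *\<^sub>R y) \<le> (1 - t) * N x + t * N y" .
  qed auto
  then have "continuous_on UNIV N" by (intro convex_on_continuous) auto
  then have "continuous_on (sphere (0::'a) 1) N" by (rule continuous_on_subset) auto
  then obtain x0 where x0: "x0 \<in> sphere (0::'a) 1" "\<And>y. y \<in> sphere 0 1 \<Longrightarrow> N x0 \<le> N y"
    using continuous_attains_inf[of "sphere (0::'a) 1" N] by auto
  have "x0 \<noteq> 0" using x0(1) by auto
  then have pos: "N x0 > 0" using z nn by (metis less_eq_real_def)
  have "N x0 * norm x \<le> N x" for x
  proof (cases "x = 0")
    case True then show ?thesis using nn by simp
  next
    case False
    have "N x0 \<le> N (x /\<^sub>R norm x)" using x0(2) False by simp
    then have "N x0 \<le> N x / norm x" using hom[of "inverse (norm x)" x] by (simp add: divide_inverse_commute)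
    then show ?thesis using False by (simp add: field_simps)
  qed
  then show ?thesis using pos by blast
qed

lemma dual_bound:
  fixes N :: "'a::euclidean_space \<Rightarrow> real"
  assumes "is_norm N"
  shows "y \<bullet> x \<le> dual_norm N y * N x"
proof -
  have nn: "\<And>x. 0 \<le> N x" and z: "\<And>x. N x = 0 \<longleftrightarrow> x = 0"
    and hom: "\<And>c x. N (c *\<^sub>R x) = \<bar>c\<bar> * N x"
    using assms unfolding is_norm_def by auto
  obtain m where m: "m > 0" "\<And>x. m * norm x \<le> N x" using norm_lower[OF assms] by blast
  have bdd: "bdd_above {y \<bullet> x | x. N x \<le> 1}"
  proof (rule bdd_aboveI)
    fix r assume "r \<in> {y \<bullet> x | x. N x \<le> 1}"
    then obtain x where r: "r = y \<bullet> x" "N x \<le> 1" by auto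
    have "norm x \<le> 1 / m" using m(2)[of x] r(2) m(1) by (simp add: field_simps)
    have "r \<le> norm y * norm x" using r(1) Cauchy_Schwarz_ineq2 by (metis norm_cauchy_schwarz)
    also have "\<dots> \<le> norm y * (1 / m)" using \<open>norm x \<le> 1 / m\<close> by (intro mult_left_mono) auto
    finally show "r \<le> norm y / m" by simp
  qed
  show ?thesis
  proof (cases "x = 0")
    case True then show ?thesis using z[of 0] by simp
  next
    case False
    then have p: "N x > 0" using z nn by (metis less_eq_real_def)
    have "N (x /\<^sub>R N x) = 1" using hom[of "inverse (N x)" x] p by simp
    then have "y \<bullet> (x /\<^sub>R N x) \<le> dual_norm N y"
      unfolding dual_norm_def by (intro cSup_upper bdd) (metis (mono_tags, lifting) mem_Collect_eq order_refl)
    then have "(y \<bullet> x) / N x \<le> dual_norm N y" by (simp add: inner_scaleR_right divide_inverse_commute)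
    then show ?thesis using p by (simp add: field_simps)
  qed
qed

lemma opt_cond:
  fixes h :: "'a::euclidean_space \<Rightarrow> real"
  assumes "convex X" "p \<in> X" "x' \<in> X"
    and der: "(h has_derivative (\<lambda>v. g \<bullet> v)) (at p)"
    and mn: "\<And>q. q \<in> X \<Longrightarrow> h p - c \<bullet> p \<le> h q - c \<bullet> q"
  shows "(g - c) \<bullet> (x' - p) \<ge> 0"
proof (rule ccontr)
  assume neg: "\<not> ?thesis"
  define d where "d = x' - p"
  define f where "f t = h (p + t *\<^sub>R d) - c \<bullet> (p + t *\<^sub>R d)" for t :: real
  have lin: "((\<lambda>t::real. p + t *\<^sub>R d) has_derivative (\<lambda>t. t *\<^sub>R d)) (at 0)"
    by (auto intro!: derivative_eq_intros)
  have "((\<lambda>t. h (p + t *\<^sub>R d)) has_derivative (\<lambda>t. g \<bullet> (t *\<^sub>R d))) (at 0)"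
    proof -
    have der': "(h has_derivative (\<lambda>v. g \<bullet> v)) (at (p + (0::real) *\<^sub>R d))" using der by simp
    show ?thesis using has_derivative_compose[OF lin der'] by simp
  qed
  then have "((\<lambda>t. h (p + t *\<^sub>R d) - c \<bullet> (p + t *\<^sub>R d)) has_derivative (\<lambda>t. g \<bullet> (t *\<^sub>R d) - c \<bullet> (t *\<^sub>R d))) (at 0)"
    by (auto intro!: derivative_eq_intros)
  then have "(f has_derivative (\<lambda>t. t * ((g - c) \<bullet> d))) (at 0)"
    unfolding f_def by (simp add: inner_diff_left algebra_simps)
  then have "(f has_real_derivative ((g - c) \<bullet> d)) (at 0)"
    by (simp add: has_field_derivative_def mult.commute[of _ "(g - c) \<bullet> d"])
  moreover have "(g - c) \<bullet> d < 0" using neg d_def by simp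
  ultimately obtain e where e: "e > 0" "\<And>t. t > 0 \<Longrightarrow> t < e \<Longrightarrow> f 0 > f (0 + t)"
    using has_real_derivative_neg_dec_right[of f _ 0 UNIV] by auto
  define t where "t = min (e/2) (1/2)"
  have t: "t > 0" "t < e" "t \<le> 1" using e by (auto simp: t_def)
  have "f 0 > f t" using e(2)[OF t(1) t(2)] by simp
  moreover have "p + t *\<^sub>R d \<in> X"
  proof -
    have "(1 - t) *\<^sub>R p + t *\<^sub>R x' \<in> X"
      using assms(1,2,3) t by (intro convexD) auto
    moreover have "(1 - t) *\<^sub>R p + t *\<^sub>R x' = p + t *\<^sub>R d" by (simp add: d_def algebra_simps)
    ultimately show ?thesis by simp
  qed
  ultimately show False using mn[of "p + t *\<^sub>R d"] unfolding f_def by simp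
qed

lemma prox_opt:
  fixes h :: "'a::euclidean_space \<Rightarrow> real"
  assumes "compact X" "convex X" "X \<subseteq> U"
    and der: "\<And>x. x \<in> U \<Longrightarrow> (h has_derivative (\<lambda>v. g x \<bullet> v)) (at x)"
    and x: "x \<in> X"
  shows "prox h g X x y \<in> X \<and> (\<forall>x'\<in>X. (g (prox h g X x y) - (y + g x)) \<bullet> (x' - prox h g X x y) \<ge> 0)"
proof -
  define F where "F q = y \<bullet> (x - q) + bregman h g q x" for q
  have F: "F q = (h q - (y + g x) \<bullet> q) + (y \<bullet> x - h x + g x \<bullet> x)" for q
    unfolding F_def bregman_def by (simp add: inner_diff_right inner_add_left)
  have "continuous_on X h"
    using der assms(3) by (meson continuous_at_imp_continuous_on has_derivative_continuous subsetD)
  then have "continuous_on X F" unfolding F_def bregman_def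
    by (intro continuous_intros) auto
  then obtain p0 where "p0 \<in> X" "\<forall>q\<in>X. F p0 \<le> F q"
    using continuous_attains_inf[OF assms(1), of F] x by auto
  then have ex: "\<exists>p. p \<in> X \<and> (\<forall>x'\<in>X. y \<bullet> (x - p) + bregman h g p x \<le> y \<bullet> (x - x') + bregman h g x' x)"
    unfolding F_def by blast
  define p where "p = prox h g X x y"
  have p: "p \<in> X" "\<forall>q\<in>X. F p \<le> F q"
    using someI_ex[OF ex] unfolding p_def prox_def F_def by auto
  have mn: "\<And>q. q \<in> X \<Longrightarrow> h p - (y + g x) \<bullet> p \<le> h q - (y + g x) \<bullet> q"
    using p(2) unfolding F by force
  have "\<forall>x'\<in>X. (g p - (y + g x)) \<bullet> (x' - p) \<ge> 0"
    using opt_cond[OF assms(2) p(1) _ der mn] p(1) assms(3) by blast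
  then show ?thesis using p unfolding p_def by blast
qed

theorem lemma2:
  fixes N :: "'a::euclidean_space \<Rightarrow> real"
    and h :: "'a \<Rightarrow> real" and g :: "'a \<Rightarrow> 'a"
    and X U :: "'a set" and K L\<^sub>h :: real
  assumes "is_norm N"
    and "compact X" and "convex X"
    and "open U" and "X \<subseteq> U"
    and "\<And>x. x \<in> U \<Longrightarrow> (h has_derivative (\<lambda>v. g x \<bullet> v)) (at x)"
    and "K > 0"
    and "\<And>x x'. x \<in> X \<Longrightarrow> x' \<in> X \<Longrightarrow> (g x - g x') \<bullet> (x - x') \<ge> K * (N (x - x'))\<^sup>2"
    and "\<And>x x'. x \<in> X \<Longrightarrow> x' \<in> X \<Longrightarrow> dual_norm N (g x - g x') \<le> L\<^sub>h * N (x - x')"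
  shows "\<forall>y x\<^sub>1 x\<^sub>2. x\<^sub>1 \<in> dom_subdiff h X \<longrightarrow> x\<^sub>2 \<in> dom_subdiff h X \<longrightarrow>
           N (prox h g X x\<^sub>1 y - prox h g X x\<^sub>2 y) \<le> L\<^sub>h / K * N (x\<^sub>1 - x\<^sub>2)"
proof (intro allI impI)
  fix y x1 x2 assume "x1 \<in> dom_subdiff h X" "x2 \<in> dom_subdiff h X"
  then have x: "x1 \<in> X" "x2 \<in> X" unfolding dom_subdiff_def by auto
  define p1 where "p1 = prox h g X x1 y"
  define p2 where "p2 = prox h g X x2 y"
  have o1: "p1 \<in> X" "(g p1 - (y + g x1)) \<bullet> (p2 - p1) \<ge> 0" if "p2 \<in> X"
    using prox_opt[OF assms(2,3,5,6) x(1), of y] that unfolding p1_def by auto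
  have o2: "p2 \<in> X" "(g p2 - (y + g x2)) \<bullet> (p1 - p2) \<ge> 0" if "p1 \<in> X"
    using prox_opt[OF assms(2,3,5,6) x(2), of y] that unfolding p2_def by auto
  have P: "p1 \<in> X" "p2 \<in> X"
    using prox_opt[OF assms(2,3,5,6) x(1), of y] prox_opt[OF assms(2,3,5,6) x(2), of y]
    unfolding p1_def p2_def by auto
  have nn: "\<And>x. 0 \<le> N x" using assms(1) unfolding is_norm_def by auto
  have "(g p1 - g p2) \<bullet> (p1 - p2) \<le> (g x1 - g x2) \<bullet> (p1 - p2)"
    using o1(2)[OF P(2)] o2(2)[OF P(1)]
    by (simp add: inner_diff_left inner_diff_right inner_add_left inner_add_right inner_commute)
  also have "\<dots> \<le> dual_norm N (g x1 - g x2) * N (p1 - p2)" by (rule dual_bound[OF assms(1)])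
  also have "\<dots> \<le> L\<^sub>h * N (x1 - x2) * N (p1 - p2)"
    using assms(9)[OF x] nn by (intro mult_right_mono) auto
  finally have KL: "K * (N (p1 - p2))\<^sup>2 \<le> L\<^sub>h * N (x1 - x2) * N (p1 - p2)"
    using assms(8)[OF P] by linarith
  have LN: "L\<^sub>h * N (x1 - x2) \<ge> 0"
  proof -
    have "0 \<le> dual_norm N (g x1 - g x2)"
    proof (cases "g x1 - g x2 = 0")
      case True
      have "N 0 \<le> 1" using assms(1) unfolding is_norm_def by (metis order.eq_iff zero_le_one)
      then have "{(g x1 - g x2) \<bullet> x | x. N x \<le> 1} = {0}" using True by auto
      then show ?thesis unfolding dual_norm_def by simp
    next
      case False
      define v where "v = g x1 - g x2"
      have "v \<bullet> v \<le> dual_norm N v * N v" by (rule dual_bound[OF assms(1)])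
      moreover have "v \<bullet> v > 0" using False v_def by simp
      moreover have "N v \<ge> 0" using nn by simp
      ultimately show ?thesis unfolding v_def[symmetric]
        by (smt (verit) mult_nonpos_nonneg)
    qed
    then show ?thesis using assms(9)[OF x] by linarith
  qed
  show "N (p1 - p2) \<le> L\<^sub>h / K * N (x1 - x2)"
  proof (cases "N (p1 - p2) = 0")
    case True
    then show ?thesis using LN assms(7) by simp
  next
    case False
    then have pos: "N (p1 - p2) > 0" using nn[of "p1 - p2"] by linarith
    have "(K * N (p1 - p2)) * N (p1 - p2) \<le> (L\<^sub>h * N (x1 - x2)) * N (p1 - p2)"
      using KL by (simp add: power2_eq_square mult.assoc)
    then have "K * N (p1 - p2) \<le> L\<^sub>h * N (x1 - x2)"
      using pos by (meson mult_le_cancel_right_pos)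
    then show ?thesis using assms(7) by (simp add: field_simps)
  qed
qed

end
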